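(* Let $G$ be a torsion-free abelian group and $H$ any group. Then every non-constant $\mathcal{T}\in\mathrm{GCA}(A^G,A^H)$ has the unique homomorphism property.
   Context: $A$ is a finite set with $|A|\ge 2$. $A^G$ is the set of functions $G\to A$ with shift action $(g\cdot x)(k):=x(g^{-1}k)$. For $\phi\in\mathrm{Hom}(H,G)$, a $\phi$-cellular automaton is a map $\mathcal{T}:A^G\to A^H$ for which there exist finite $T\subseteq G$ and $\mu:A^T\to A$ with $\mathcal{T}(x)(h)=\mu((\phi(h^{-1})\cdot x)|_T)$ for all $x,h$; $\mathrm{GCA}(A^G,A^H)$ is the set of all $\phi$-cellular automata $A^G\to A^H$ over all $\phi\in\mathrm{Hom}(H,G)$, and $\mathrm{CA}(A^G)$ is the set of $\mathrm{id}_G$-cellular automata. $\phi^*(x):=x\circ\phi$. $\mathcal{T}\in\mathrm{GCA}(A^G,A^H)$ has the unique homomorphism property (UHP) if $\mathcal{T}=\phi^*\circ\tau=\psi^*\circ\tau$ with $\phi,\psi\in\mathrm{Hom}(H,G)$, $\tau\in\mathrm{CA}(A^G)$ implies $\phi=\psi$ (every $\phi$-cellular automaton can be written as $\phi^*\circ\tau$ for a unique $\tau\in\mathrm{CA}(A^G)$). *)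

theory Defs
  imports "HOL-Library.FuncSet" "HOL-Library.Cardinality"
begin

text \<open>Groups are rendered via type classes: G is a type of class ab_group_add
 (abelian group, additive notation), H a type of class group_add (arbitrary group,
 written additively).\<close>

definition torsion_free :: "'g::group_add itself \<Rightarrow> bool" where
  "torsion_free _ \<longleftrightarrow> (\<forall>(g::'g) (n::nat). n > 0 \<and> ((\<lambda>y. g + y) ^^ n) 0 = 0 \<longrightarrow> g = 0)"

definition is_hom :: "('h::group_add \<Rightarrow> 'g::group_add) \<Rightarrow> bool" where
  "is_hom \<phi> \<longleftrightarrow> (\<forall>a b. \<phi> (a + b) = \<phi> a + \<phi> b)"

definition shift :: "'g::group_add \<Rightarrow> ('g \<Rightarrow> 'a) \<Rightarrow> ('g \<Rightarrow> 'a)" where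
  "shift g x = (\<lambda>k. x (- g + k))"

definition is_phi_CA :: "('h::group_add \<Rightarrow> 'g::group_add) \<Rightarrow> (('g \<Rightarrow> 'a) \<Rightarrow> ('h \<Rightarrow> 'a)) \<Rightarrow> bool" where
  "is_phi_CA \<phi> \<T> \<longleftrightarrow> (\<exists>S \<mu>. finite S \<and>
      (\<forall>x h. \<T> x h = \<mu> (restrict (shift (\<phi> (- h)) x) S)))"

definition GCA :: "(('g::group_add \<Rightarrow> 'a) \<Rightarrow> ('h::group_add \<Rightarrow> 'a)) set" where
  "GCA = {\<T>. \<exists>\<phi>. is_hom \<phi> \<and> is_phi_CA \<phi> \<T>}"

definition CA :: "(('g::group_add \<Rightarrow> 'a) \<Rightarrow> ('g \<Rightarrow> 'a)) set" where
  "CA = {\<tau>. is_phi_CA id \<tau>}"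

definition pullback :: "('h \<Rightarrow> 'g) \<Rightarrow> ('g \<Rightarrow> 'a) \<Rightarrow> ('h \<Rightarrow> 'a)" where
  "pullback \<phi> x = x \<circ> \<phi>"

definition UHP :: "(('g::group_add \<Rightarrow> 'a) \<Rightarrow> ('h::group_add \<Rightarrow> 'a)) \<Rightarrow> bool" where
  "UHP \<T> \<longleftrightarrow> (\<forall>\<phi> \<psi> \<tau>. is_hom \<phi> \<and> is_hom \<psi> \<and> \<tau> \<in> CA \<and>
      \<T> = pullback \<phi> \<circ> \<tau> \<and> \<T> = pullback \<psi> \<circ> \<tau> \<longrightarrow> \<phi> = \<psi>)"

end

theory Submission
  imports Defs
begin

lemma iter_add:
  fixes d :: "'g::ab_group_add"
  shows "((\<lambda>y. d + y) ^^ n) y = y + ((\<lambda>y. d + y) ^^ n) 0"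
  by (induction n) (auto simp: algebra_simps)

lemma iter_sum:
  fixes d :: "'g::ab_group_add"
  shows "((\<lambda>y. d + y) ^^ (a + k)) 0 = ((\<lambda>y. d + y) ^^ a) 0 + ((\<lambda>y. d + y) ^^ k) 0"
proof -
  have "((\<lambda>y. d + y) ^^ (k + a)) 0 = ((\<lambda>y. d + y) ^^ k) (((\<lambda>y. d + y) ^^ a) 0)"
    by (simp add: funpow_add)
  also have "\<dots> = ((\<lambda>y. d + y) ^^ a) 0 + ((\<lambda>y. d + y) ^^ k) 0"
    by (rule iter_add)
  finally show ?thesis by (simp add: add.commute)
qed

lemma iter_inj:
  fixes d :: "'g::ab_group_add"
  assumes tf: "torsion_free TYPE('g)" and d: "d \<noteq> 0"
  shows "inj (\<lambda>n. ((\<lambda>y. d + y) ^^ n) 0)"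
proof (rule injI)
  have main: "a < b \<Longrightarrow> ((\<lambda>y. d + y) ^^ a) 0 \<noteq> ((\<lambda>y. d + y) ^^ b) 0" for a b
  proof
    assume ab: "a < b" and eq: "((\<lambda>y. d + y) ^^ a) 0 = ((\<lambda>y. d + y) ^^ b) 0"
    obtain k where b: "b = a + k" and k: "k > 0" using ab by (metis less_imp_add_positive)
    have "((\<lambda>y. d + y) ^^ k) 0 = 0" using eq unfolding b iter_sum by simp
    with tf k have "d = 0" unfolding torsion_free_def by blast
    with d show False by simp
  qed
  fix a b assume "((\<lambda>y. d + y) ^^ a) 0 = ((\<lambda>y. d + y) ^^ b) 0"
  then show "a = b" using main[of a b] main[of b a] by (metis linorder_neqE_nat)
qed

theorem corollary3p10:
  fixes \<T> :: "('g::ab_group_add \<Rightarrow> 'a::finite) \<Rightarrow> ('h::group_add \<Rightarrow> 'a)"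
  assumes "CARD('a) \<ge> 2"
    and "torsion_free TYPE('g)"
    and "\<T> \<in> GCA"
    and "\<exists>x y. \<T> x \<noteq> \<T> y"
  shows "UHP \<T>"
  unfolding UHP_def
proof (intro allI impI, elim conjE)
  fix \<phi> \<psi> :: "'h \<Rightarrow> 'g" and \<tau>
  assume "\<tau> \<in> CA" and T1: "\<T> = pullback \<phi> \<circ> \<tau>" and T2: "\<T> = pullback \<psi> \<circ> \<tau>"
  then obtain S \<mu> where S: "finite S" and tau: "\<And>x k. \<tau> x k = \<mu> (restrict (\<lambda>s. x (k + s)) S)"
    unfolding CA_def is_phi_CA_def shift_def by auto
  define P where "P z = \<tau> z 0" for z
  have Pk: "\<tau> y k = P (\<lambda>s. y (k + s))" for y k unfolding P_def tau by simp
  obtain x0 y0 where ne: "\<T> x0 \<noteq> \<T> y0" using assms(4) by blast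
  show "\<phi> = \<psi>"
  proof
    fix h
    show "\<phi> h = \<psi> h"
    proof (rule ccontr)
      assume hne: "\<phi> h \<noteq> \<psi> h"
      define a where "a = \<psi> h"
      define d where "d = \<phi> h - \<psi> h"
      have d0: "d \<noteq> 0" using hne unfolding d_def by simp
      have per0: "\<tau> x (a + d) = \<tau> x a" for x
      proof -
        have "\<tau> x (\<phi> h) = \<tau> x (\<psi> h)"
          using fun_cong[OF fun_cong[OF trans[OF sym[OF T1] T2], of x], of h]
          by (simp add: pullback_def)
        then show ?thesis unfolding a_def d_def by simp
      qed
      have per: "\<tau> y (k + d) = \<tau> y k" for y k
      proof -
        have "\<tau> (\<lambda>t. y (t - a + k)) (a + d) = \<tau> (\<lambda>t. y (t - a + k)) a" by (rule per0)
        then have "P (\<lambda>s. y (a + d + s - a + k)) = P (\<lambda>s. y (a + s - a + k))"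
          unfolding Pk by simp
        moreover have "(\<lambda>s. y (a + d + s - a + k)) = (\<lambda>s. y (k + d + s))"
          by (simp add: algebra_simps)
        moreover have "(\<lambda>s. y (a + s - a + k)) = (\<lambda>s. y (k + s))"
          by (simp add: algebra_simps)
        ultimately show ?thesis unfolding Pk by simp
      qed
      define m where "m n = ((\<lambda>y. d + y) ^^ n) 0" for n
      have perm: "\<tau> y (k + m n) = \<tau> y k" for y k n
      proof (induction n)
        case 0 then show ?case by (simp add: m_def)
      next
        case (Suc n)
        have "\<tau> y (k + m (Suc n)) = \<tau> y ((k + m n) + d)" by (simp add: m_def algebra_simps)
        also have "\<dots> = \<tau> y (k + m n)" by (rule per)
        finally show ?case using Suc by simp
      qed
      define D where "D = (\<lambda>(s, t). s - t) ` (S \<times> S)"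
      have fD: "finite D" unfolding D_def using S by simp
      have "inj m" unfolding m_def by (rule iter_inj[OF assms(2) d0])
      then have "infinite (range m)" by (simp add: finite_image_iff)
      then obtain n where nD: "m n \<notin> D"
        using fD by (metis (no_types, lifting) finite_subset image_subsetI UNIV_I subsetI)
      define c where "c = m n"
      have const: "P y = P z" for y z
      proof -
        define w where "w t = (if t \<in> S then y t else z (t - c))" for t
        have cs: "c + s \<notin> S" if "s \<in> S" for s
        proof
          assume "c + s \<in> S"
          then have "(c + s) - s \<in> D" unfolding D_def using that by force
          then show False using nD unfolding c_def by simp
        qed
        have "P w = \<mu> (restrict y S)" unfolding P_def tau
          by (intro arg_cong[where f=\<mu>]) (auto simp: w_def restrict_def)
        moreover have "\<tau> w c = \<mu> (restrict z S)" unfolding tau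
          by (intro arg_cong[where f=\<mu>]) (auto simp: w_def restrict_def cs)
        moreover have "\<tau> w (0 + c) = \<tau> w 0" unfolding c_def by (rule perm)
        ultimately show ?thesis unfolding P_def tau by simp
      qed
      have "\<tau> x0 = \<tau> y0" using const by (auto simp: Pk)
      then have "\<T> x0 = \<T> y0" using T1 by simp
      with ne show False by simp
    qed
  qed
qed

end
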